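(* Let $\mathsf{F}$ be a fixed plane forest with $m\ge 0$ vertices and $h$ components. Choose a plane tree with $k$ vertices uniformly at random. Let $\rho_k(\mathsf{F}^+)$ be the number of non-root vertices $v$ such that: <ul> <li>$F(v)$ has at least $m$ vertices, and</li> <li>the subforest induced by the last $m$ vertices of $F(v)$ in preorder is isomorphic to $\mathsf{F}$,</li> </ul> divided by $k$. Then $\rho_k(\mathsf{F}^+)$ is concentrated (as $k\to\infty$) at $$\mu_\rho(\mathsf{F}^+)=\frac{1}{2^{2m-h}}.$$
   Context: A plane tree is a rooted tree in which the children of each vertex are linearly ordered (left to right). A plane forest is a finite (possibly empty) sequence of plane trees; isomorphism of plane forests preserves the order of components and of children. For a non-root vertex $v$ of a plane tree, $F(v)$ denotes the plane forest whose components are the subtrees rooted at those siblings of $v$ that precede $v$ in the left-to-right order of the children of the parent of $v$, listed in that order. The preorder of a plane forest lists each vertex before its descendants, visiting components in order and children from left to right. The subforest induced by a set of vertices inherits the plane structure: components are ordered by preorder, and children keep their order. A sequence of random variables $(\xi_k)$ is concentrated at a constant $\mu$ if for every $\varepsilon>0$ there is $K$ such that $\mathbb{P}[|\xi_k-\mu|\le\varepsilon]>1-\varepsilon$ for all $k\ge K$. *)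

theory Defs
  imports Complex_Main
begin

text \<open>Plane trees: a vertex with an ordered list of subtrees. Plane forests are lists
of plane trees; isomorphism of plane trees/forests is equality.\<close>
datatype ptree = Node "ptree list"

fun children :: "ptree \<Rightarrow> ptree list" where
  "children (Node cs) = cs"

fun nverts :: "ptree \<Rightarrow> nat" where
  "nverts (Node cs) = 1 + sum_list (map nverts cs)"

definition fsize :: "ptree list \<Rightarrow> nat" where
  "fsize ts = sum_list (map nverts ts)"

text \<open>Vertices of a tree are addressed by paths of child indices; the root is [].\<close>
inductive is_pos :: "ptree \<Rightarrow> nat list \<Rightarrow> bool" where
  root: "is_pos t []"
| child: "i < length cs \<Longrightarrow> is_pos (cs ! i) p \<Longrightarrow> is_pos (Node cs) (i # p)"

fun subtree_at :: "ptree \<Rightarrow> nat list \<Rightarrow> ptree" where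
  "subtree_at t [] = t"
| "subtree_at (Node cs) (i # p) = subtree_at (cs ! i) p"

text \<open>F(v) for a non-root vertex v at path p: the subtrees of the siblings of v
preceding v, in order.\<close>
definition Fv :: "ptree \<Rightarrow> nat list \<Rightarrow> ptree list" where
  "Fv t p = take (last p) (children (subtree_at t (butlast p)))"

text \<open>Subforest induced by the vertices whose preorder index satisfies P
(indices start at off). Each selected vertex becomes the child of its nearest
selected ancestor; the order (preorder) is preserved.\<close>
fun induce :: "(nat \<Rightarrow> bool) \<Rightarrow> nat \<Rightarrow> ptree list \<Rightarrow> ptree list" where
  "induce P off [] = []"
| "induce P off (Node cs # ts) =
     (if P off then [Node (induce P (Suc off) cs)] else induce P (Suc off) cs)
     @ induce P (off + nverts (Node cs)) ts"

definition last_sub :: "nat \<Rightarrow> ptree list \<Rightarrow> ptree list" where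
  "last_sub m f = induce (\<lambda>i. fsize f - m \<le> i) 0 f"

definition plane_trees :: "nat \<Rightarrow> ptree set" where
  "plane_trees k = {t. nverts t = k}"

definition rho :: "ptree list \<Rightarrow> ptree \<Rightarrow> real" where
  "rho F t = real (card {p. is_pos t p \<and> p \<noteq> [] \<and>
        fsize (Fv t p) \<ge> fsize F \<and> last_sub (fsize F) (Fv t p) = F}) / real (nverts t)"

end

theory Submission
  imports Defs
begin


fun pre :: "ptree \<Rightarrow> nat list" where
  "pre (Node cs) = length cs # concat (map pre cs)"

definition pref :: "ptree list \<Rightarrow> nat list" where
  "pref f = concat (map pre f)"

lemma pref_simps[simp]: "pref [] = []" "pref (t#f) = pre t @ pref f" "pref (f @ g) = pref f @ pref g"
  by (auto simp: pref_def)

lemma pre_Node: "pre (Node cs) = length cs # pref cs" by (simp add: pref_def)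
declare pre.simps[simp del]
declare pre_Node[simp]

lemma length_pre: "length (pre t) = nverts t"
proof (induction t)
  case (Node cs)
  then have "length (pref cs) = sum_list (map nverts cs)"
    by (induction cs) auto
  then show ?case by simp
qed

lemma length_pref: "length (pref f) = fsize f"
  by (induction f) (auto simp: fsize_def length_pre)

definition sm :: "nat list \<Rightarrow> int" where
  "sm xs = sum_list (map (\<lambda>x. int x - 1) xs)"

lemma sm_simps[simp]: "sm [] = 0" "sm (x#xs) = int x - 1 + sm xs" "sm (xs@ys) = sm xs + sm ys"
  by (auto simp: sm_def)

lemma sm_eq: "sm xs = int (sum_list xs) - int (length xs)"
  by (induction xs) auto

definition fval :: "nat \<Rightarrow> nat list \<Rightarrow> bool" where
  "fval h w \<longleftrightarrow> (\<forall>j<length w. sm (take j w) > - int h) \<and> sm w = - int h"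

lemma fval0: "fval 0 a \<Longrightarrow> a = []"
proof (rule ccontr)
  assume "fval 0 a" "a \<noteq> []"
  then have "sm (take 0 a) > - int 0" unfolding fval_def by auto
  then show False by simp
qed

lemma fval_append:
  assumes "fval a u" "fval b v" shows "fval (a+b) (u@v)"
proof -
  have b0: "b = 0 \<Longrightarrow> v = []"
    using assms(2) fval0 by blast
  show ?thesis unfolding fval_def
  proof (intro conjI allI impI)
    fix j assume j: "j < length (u@v)"
    show "sm (take j (u@v)) > - int (a+b)"
    proof (cases "j \<le> length u")
      case True
      show ?thesis
      proof (cases "j < length u")
        case True then show ?thesis using assms(1) unfolding fval_def by force
      next
        case False
        with \<open>j \<le> length u\<close> have "j = length u" by simp
        with j have "v \<noteq> []" by auto
        with b0 have "b > 0" by auto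
        then show ?thesis using assms(1) \<open>j = length u\<close> unfolding fval_def by simp
      qed
    next
      case False
      then have "take j (u@v) = u @ take (j - length u) v" by simp
      moreover have "j - length u < length v" using j False by simp
      ultimately show ?thesis using assms unfolding fval_def by force
    qed
  next
    show "sm (u@v) = - int (a+b)" using assms unfolding fval_def by simp
  qed
qed

lemma fval_Nil[simp]: "fval 0 []" by (simp add: fval_def)

lemma fval_cons:
  "fval h (x#w) \<longleftrightarrow> h \<ge> 1 \<and> fval (x + h - 1) w"
proof
  assume A: "fval h (x#w)"
  have h1: "h \<ge> 1"
  proof -
    have "sm (take 0 (x#w)) > - int h" using A unfolding fval_def by blast
    then show ?thesis by simp
  qed
  have "\<forall>j<length w. sm (take j w) > - int (x + h - 1)"
  proof (intro allI impI)
    fix j assume "j < length w"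
    then have "sm (take (Suc j) (x#w)) > - int h" using A unfolding fval_def by auto
    then show "sm (take j w) > - int (x + h - 1)" using h1 by simp
  qed
  moreover have "sm w = - int (x + h - 1)" using A h1 unfolding fval_def by simp
  ultimately show "h \<ge> 1 \<and> fval (x + h - 1) w" using h1 unfolding fval_def by blast
next
  assume A: "h \<ge> 1 \<and> fval (x + h - 1) w"
  show "fval h (x#w)" unfolding fval_def
  proof (intro conjI allI impI)
    fix j assume j: "j < length (x#w)"
    show "sm (take j (x#w)) > - int h"
    proof (cases j)
      case 0 then show ?thesis using A by simp
    next
      case (Suc j')
      then have "sm (take j' w) > - int (x + h - 1)" using A j unfolding fval_def by auto
      then show ?thesis using Suc A by simp
    qed
  next
    show "sm (x#w) = - int h" using A unfolding fval_def by simp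
  qed
qed

lemma fval_pre: "fval 1 (pre t)"
proof (induction t)
  case (Node cs)
  have "fval (length cs) (pref cs)" using Node
  proof (induction cs)
    case Nil then show ?case by simp
  next
    case (Cons c cs)
    then have "fval (1 + length cs) (pre c @ pref cs)" by (intro fval_append) auto
    then show ?case by simp
  qed
  then show ?case by (simp add: fval_cons)
qed

lemma fval_pref: "fval (length f) (pref f)"
proof (induction f)
  case Nil then show ?case by simp
next
  case (Cons c cs)
  then have "fval (1 + length cs) (pre c @ pref cs)" by (intro fval_append fval_pre)
  then show ?case by simp
qed

lemma fval_parse: "fval h w \<Longrightarrow> \<exists>f. length f = h \<and> pref f = w"
proof (induction w arbitrary: h)
  case Nil
  then have "h = 0" by (simp add: fval_def)
  then show ?case by auto
next
  case (Cons x w)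
  then have h1: "h \<ge> 1" and fw: "fval (x + h - 1) w" by (auto simp: fval_cons)
  from Cons.IH[OF fw] obtain f where f: "length f = x + h - 1" "pref f = w" by blast
  let ?g = "Node (take x f) # drop x f"
  have "pref ?g = x # pref (take x f @ drop x f)" using f h1 by (simp del: append_take_drop_id)
  then have "pref ?g = x # w" using f by simp
  moreover have "length ?g = h" using f h1 by simp
  ultimately show ?case by blast
qed

lemma fval_unique: "fval h w \<Longrightarrow> fval h' w \<Longrightarrow> h = h'"
  by (simp add: fval_def)

lemma pre_inj_aux:
  "\<forall>t' u u'. pre t @ u = pre t' @ u' \<longrightarrow> t = t' \<and> u = u'"
proof (induction t)
  case (Node cs)
  have F: "\<forall>cs' u u'. length cs = length cs' \<longrightarrow> pref cs @ u = pref cs' @ u' \<longrightarrow> cs = cs' \<and> u = u'"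
    using Node
  proof (induction cs)
    case Nil then show ?case by simp
  next
    case (Cons c cs)
    have IH: "\<forall>cs' u u'. length cs = length cs' \<longrightarrow> pref cs @ u = pref cs' @ u' \<longrightarrow> cs = cs' \<and> u = u'"
    proof (rule Cons.IH)
      fix x assume "x \<in> set cs"
      then show "\<forall>t' u u'. pre x @ u = pre t' @ u' \<longrightarrow> x = t' \<and> u = u'"
        by (intro Cons.prems) simp
    qed
    have H: "\<forall>t' u u'. pre c @ u = pre t' @ u' \<longrightarrow> c = t' \<and> u = u'"
      by (rule Cons.prems) simp
    show ?case
    proof (intro allI impI)
      fix cs' u u' assume l: "length (c#cs) = length cs'" and e: "pref (c#cs) @ u = pref cs' @ u'"
      then obtain c' cs'' where cs': "cs' = c' # cs''" by (cases cs') auto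
      have E: "pre c @ (pref cs @ u) = pre c' @ (pref cs'' @ u')" using e cs' by simp
      have "c = c' \<and> pref cs @ u = pref cs'' @ u'"
        using H[rule_format, OF E] .
      then have c: "c = c'" and r: "pref cs @ u = pref cs'' @ u'" by auto
      have l2: "length cs = length cs''" using l cs' by simp
      have "cs = cs'' \<and> u = u'" using IH[rule_format, OF l2 r] .
      then show "c # cs = cs' \<and> u = u'" using cs' c by simp
    qed
  qed
  show ?case
  proof (intro allI impI)
    fix t' u u' assume e: "pre (Node cs) @ u = pre t' @ u'"
    obtain cs' where t': "t' = Node cs'" by (cases t')
    from e t' have l: "length cs = length cs'" and r: "pref cs @ u = pref cs' @ u'" by auto
    have "cs = cs' \<and> u = u'" using F[rule_format, OF l r] .
    then show "Node cs = t' \<and> u = u'" using t' by simp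
  qed
qed

lemma pre_inj: assumes "pre t = pre t'" shows "t = t'"
proof -
  have "pre t @ [] = pre t' @ [] \<longrightarrow> t = t' \<and> [] = ([]::nat list)"
    using pre_inj_aux[of t] by blast
  then show ?thesis using assms by simp
qed

lemma pref_inj: assumes "pref f = pref g" shows "f = g"
proof -
  have "fval (length g) (pref f)" using fval_pref[of g] assms by simp
  then have "length f = length g" using fval_pref[of f] fval_unique by blast
  then show ?thesis using assms
  proof (induction f arbitrary: g)
    case Nil then show ?case by simp
  next
    case (Cons c f)
    obtain c' g' where g: "g = c' # g'" using Cons.prems(1) by (cases g) auto
    have E: "pre c @ pref f = pre c' @ pref g'" using Cons.prems(2) g by simp
    have "pre c @ pref f = pre c' @ pref g' \<longrightarrow> c = c' \<and> pref f = pref g'"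
      using pre_inj_aux[of c] by blast
    then have c: "c = c'" and r: "pref f = pref g'" using E by auto
    have l: "length f = length g'" using Cons.prems(1) g by simp
    have "f = g'" using Cons.IH[OF l r] .
    then show ?case using g c by simp
  qed
qed

lemma pre_image: "pre ` plane_trees k = {w. length w = k \<and> fval 1 w}"
proof
  show "pre ` plane_trees k \<subseteq> {w. length w = k \<and> fval 1 w}"
  proof
    fix w assume "w \<in> pre ` plane_trees k"
    then obtain t where t: "nverts t = k" "w = pre t" by (auto simp: plane_trees_def)
    then show "w \<in> {w. length w = k \<and> fval 1 w}" using fval_pre[of t] by (simp add: length_pre)
  qed
next
  show "{w. length w = k \<and> fval 1 w} \<subseteq> pre ` plane_trees k"
  proof
    fix w assume "w \<in> {w. length w = k \<and> fval 1 w}"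
    then have w: "length w = k" "fval 1 w" by auto
    from fval_parse[OF w(2)] obtain f where "length f = 1" "pref f = w" by blast
    then obtain t where "f = [t]" by (cases f) auto
    with \<open>pref f = w\<close> have "pre t = w" by simp
    with w show "w \<in> pre ` plane_trees k" by (auto simp: plane_trees_def length_pre[symmetric])
  qed
qed

lemma inj_pre: "inj_on pre A" by (meson inj_onI pre_inj)



lemma induce_all: "(\<forall>i\<ge>off. P i) \<Longrightarrow> induce P off f = f"
proof (induction P off f rule: induce.induct)
  case (1 P off) then show ?case by simp
next
  case (2 P off cs ts)
  then show ?case by simp
qed

lemma nverts_pre: "nverts t = length (pre t)" by (simp add: length_pre)

lemma induce_drop: "pref (induce (\<lambda>i. c \<le> i) off f) = drop (c - off) (pref f)"
proof (induction "\<lambda>i::nat. c \<le> i" off f rule: induce.induct)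
  case (1 off) then show ?case by simp
next
  case (2 off cs ts)
  show ?case
  proof (cases "c \<le> off")
    case True
    then have "induce (\<lambda>i. c \<le> i) off (Node cs # ts) = Node cs # ts"
      by (intro induce_all) auto
    then show ?thesis using True by simp
  next
    case False
    have n: "nverts (Node cs) = Suc (length (pref cs))" by (simp add: nverts_pre)
    have "pref (induce (\<lambda>i. c \<le> i) off (Node cs # ts)) =
       drop (c - Suc off) (pref cs) @ drop (c - (off + nverts (Node cs))) (pref ts)"
      using False 2 by simp
    also have "\<dots> = drop (c - off) (pref (Node cs # ts))"
      using False n by (simp add: drop_Cons' Suc_diff_Suc)
    finally show ?thesis .
  qed
qed

lemma last_sub_pref: "m \<le> fsize f \<Longrightarrow> pref (last_sub m f) = drop (fsize f - m) (pref f)"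
  unfolding last_sub_def by (simp add: induce_drop)

definition sfx :: "nat list \<Rightarrow> nat list \<Rightarrow> bool" where
  "sfx a w \<longleftrightarrow> length a \<le> length w \<and> drop (length w - length a) w = a"

definition Q :: "ptree list \<Rightarrow> ptree list \<Rightarrow> bool" where
  "Q F f \<longleftrightarrow> fsize F \<le> fsize f \<and> last_sub (fsize F) f = F"

lemma Q_sfx: "Q F f \<longleftrightarrow> sfx (pref F) (pref f)"
proof
  assume "Q F f"
  then have le: "fsize F \<le> fsize f" and eq: "last_sub (fsize F) f = F" by (auto simp: Q_def)
  then show "sfx (pref F) (pref f)"
    using last_sub_pref[OF le] by (simp add: sfx_def length_pref)
next
  assume s: "sfx (pref F) (pref f)"
  then have le: "fsize F \<le> fsize f" by (simp add: sfx_def length_pref)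
  then have "pref (last_sub (fsize F) f) = pref F"
    using s last_sub_pref[OF le] by (simp add: sfx_def length_pref)
  then show "Q F f" using le pref_inj by (auto simp: Q_def)
qed

lemma sfx_Cons: "sfx a (x#w) \<longleftrightarrow> a = x#w \<or> sfx a w"
proof (cases "length a \<le> length w")
  case True
  then have "drop (length (x#w) - length a) (x#w) = drop (length w - length a) w"
    by (simp add: Suc_diff_le)
  moreover have "a \<noteq> x#w" using True by auto
  ultimately show ?thesis using True unfolding sfx_def by simp
next
  case False
  show ?thesis
  proof (cases "length a = Suc (length w)")
    case True
    then show ?thesis using False unfolding sfx_def by auto
  next
    case False2: False
    then have "a \<noteq> x#w" by auto
    then show ?thesis using False False2 unfolding sfx_def by simp
  qed
qed


lemma fval_ne: "fval h a \<Longrightarrow> v \<noteq> [] \<Longrightarrow> sm v \<ge> 0 \<Longrightarrow> a \<noteq> v"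
proof
  assume "fval h a" "v \<noteq> []" "sm v \<ge> 0" "a = v"
  then have "h = 0" unfolding fval_def by simp
  then show False using fval0 \<open>fval h a\<close> \<open>v \<noteq> []\<close> \<open>a = v\<close> by simp
qed

lemma sfx_append:
  assumes fa: "fval h a" and v: "v \<noteq> []" "sm v \<ge> 0" and s: "sfx a (u @ v)"
  shows "sfx a v"
proof (cases "length a \<le> length v")
  case True
  then show ?thesis using s by (simp add: sfx_def)
next
  case False
  define d where "d = length u + length v - length a"
  have "length a \<le> length u + length v" using s unfolding sfx_def by simp
  then have dl: "d < length u" using False unfolding d_def by arith
  have eq: "drop d u @ v = a" using s dl by (simp add: sfx_def d_def[symmetric])
  define a1 where "a1 = drop d u"
  have t: "take (length a1) a = a1" using eq a1_def by auto
  have "length a1 < length a" using eq v a1_def by auto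
  then have "sm (take (length a1) a) > - int h" using fa unfolding fval_def by blast
  then have "sm a1 > - int h" using t by simp
  moreover have "sm a = sm a1 + sm v" using eq a1_def by auto
  ultimately show ?thesis using fa v unfolding fval_def by simp
qed



definition ind :: "bool \<Rightarrow> nat" where "ind b = (if b then 1 else 0)"

lemma card_ind: "card {i. i < (n::nat) \<and> P i} = (\<Sum>i<n. ind (P i))"
proof (induction n)
  case 0 show ?case by simp
next
  case (Suc n)
  have e: "{i. i < Suc n \<and> P i} = {i. i < n \<and> P i} \<union> {i. i = n \<and> P i}" by auto
  have c: "card ({i. i < n \<and> P i} \<union> {i. i = n \<and> P i}) = card {i. i < n \<and> P i} + card {i. i = n \<and> P i}"
    by (rule card_Un_disjoint) auto
  have d: "card {i. i = n \<and> P i} = ind (P n)"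
  proof (cases "P n")
    case True
    then have "{i. i = n \<and> P i} = {n}" by auto
    then show ?thesis using True by (simp add: ind_def)
  next
    case False
    then show ?thesis by (simp add: ind_def)
  qed
  show ?case using Suc e c d by simp
qed

fun cnt :: "nat list \<Rightarrow> ptree \<Rightarrow> nat" where
  "cnt a (Node cs) = card {i. i < length cs \<and> sfx a (pref (take i cs))} + sum_list (map (cnt a) cs)"

lemma is_pos_Node: "is_pos (Node cs) p \<longleftrightarrow> p = [] \<or> (\<exists>i q. p = i#q \<and> i < length cs \<and> is_pos (cs!i) q)"
proof
  assume "is_pos (Node cs) p"
  then show "p = [] \<or> (\<exists>i q. p = i#q \<and> i < length cs \<and> is_pos (cs!i) q)"
    by (cases rule: is_pos.cases) auto
next
  assume "p = [] \<or> (\<exists>i q. p = i#q \<and> i < length cs \<and> is_pos (cs!i) q)"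
  then show "is_pos (Node cs) p" by (auto intro: is_pos.intros)
qed

lemma finite_pos: "finite {p. is_pos t p}"
proof (induction t)
  case (Node cs)
  have "{p. is_pos (Node cs) p} = {[]} \<union> (\<Union>i<length cs. Cons i ` {q. is_pos (cs!i) q})"
    unfolding is_pos_Node by auto
  moreover have "finite (\<Union>i<length cs. Cons i ` {q. is_pos (cs!i) q})"
    using Node by (auto intro!: finite_UN_I)
  ultimately show ?case by simp
qed

definition posset :: "ptree list \<Rightarrow> ptree \<Rightarrow> nat list set" where
  "posset F t = {p. is_pos t p \<and> p \<noteq> [] \<and> Q F (Fv t p)}"

lemma Fv_single: "Fv (Node cs) [i] = take i cs" by (simp add: Fv_def)

lemma Fv_cons: "q \<noteq> [] \<Longrightarrow> Fv (Node cs) (i#q) = Fv (cs!i) q"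
  by (cases q) (auto simp: Fv_def)

lemma posset_Node:
  "posset F (Node cs) = (\<lambda>i. [i]) ` {i. i < length cs \<and> Q F (take i cs)}
     \<union> (\<Union>i<length cs. Cons i ` posset F (cs!i))" (is "?L = ?A \<union> ?B")
proof
  show "?L \<subseteq> ?A \<union> ?B"
  proof
    fix p assume "p \<in> ?L"
    then have p: "is_pos (Node cs) p" "p \<noteq> []" "Q F (Fv (Node cs) p)" by (auto simp: posset_def)
    then obtain i q where iq: "p = i#q" "i < length cs" "is_pos (cs!i) q" using is_pos_Node by blast
    show "p \<in> ?A \<union> ?B"
    proof (cases "q = []")
      case True
      then show ?thesis using iq p Fv_single by auto
    next
      case False
      then have "q \<in> posset F (cs!i)" using iq p Fv_cons by (auto simp: posset_def)
      then show ?thesis using iq by auto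
    qed
  qed
next
  show "?A \<union> ?B \<subseteq> ?L"
  proof
    fix p assume "p \<in> ?A \<union> ?B"
    then show "p \<in> ?L"
    proof
      assume "p \<in> ?A"
      then obtain i where "p = [i]" "i < length cs" "Q F (take i cs)" by auto
      then show ?thesis using Fv_single by (auto simp: posset_def is_pos_Node intro: is_pos.intros)
    next
      assume "p \<in> ?B"
      then obtain i q where "p = i#q" "i < length cs" "q \<in> posset F (cs!i)" by auto
      then show ?thesis using Fv_cons by (auto simp: posset_def is_pos_Node)
    qed
  qed
qed

lemma card_posset: "card (posset F t) = cnt (pref F) t"
proof (induction t)
  case (Node cs)
  let ?A = "(\<lambda>i. [i]) ` {i. i < length cs \<and> Q F (take i cs)}"
  let ?B = "\<Union>i<length cs. Cons i ` posset F (cs!i)"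
  have fin: "\<And>i. finite (posset F (cs!i))"
    using finite_pos by (rule rev_finite_subset) (auto simp: posset_def)
  have finA: "finite ?A" by simp
  have finB: "finite ?B" using fin by auto
  have disj: "?A \<inter> ?B = {}" by (auto simp: posset_def)
  have cA: "card ?A = card {i. i < length cs \<and> Q F (take i cs)}"
    by (rule card_image) (auto simp: inj_on_def)
  have cB: "card ?B = (\<Sum>i<length cs. card (Cons i ` posset F (cs!i)))"
    by (rule card_UN_disjoint) (use fin in auto)
  also have "\<dots> = (\<Sum>i<length cs. card (posset F (cs!i)))"
    by (intro sum.cong refl card_image) (auto simp: inj_on_def)
  also have "\<dots> = (\<Sum>i<length cs. cnt (pref F) (cs!i))"
    using Node by (intro sum.cong refl) auto
  also have "\<dots> = sum_list (map (cnt (pref F)) cs)"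
    by (simp add: sum_list_sum_nth atLeast0LessThan)
  finally have cB': "card ?B = sum_list (map (cnt (pref F)) cs)" .
  have "card (posset F (Node cs)) = card ?A + card ?B"
    unfolding posset_Node by (rule card_Un_disjoint[OF finA finB disj])
  then show ?case using cA cB' Q_sfx by simp
qed

definition G :: "nat list \<Rightarrow> nat list \<Rightarrow> nat list \<Rightarrow> nat" where
  "G a u w = (\<Sum>j<length w. ind (sfx a (u @ take j w)))"

definition Lin :: "nat list \<Rightarrow> nat list \<Rightarrow> nat" where
  "Lin a w = (\<Sum>j<length w. ind (1 \<le> j \<and> sfx a (take j w)))"

lemma sum_split_nat: "(\<Sum>j<m+(n::nat). f j) = (\<Sum>j<m. f j) + (\<Sum>j<n. f (m+j)::nat)"
  by (induction n) auto

lemma G_append: "G a u (v @ w) = G a u v + G a (u @ v) w"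
proof -
  have "G a u (v @ w) = (\<Sum>j<length v. ind (sfx a (u @ take j (v@w)))) + (\<Sum>j<length w. ind (sfx a (u @ take (length v + j) (v@w))))"
    unfolding G_def by (simp add: sum_split_nat)
  also have "\<dots> = G a u v + G a (u @ v) w"
    unfolding G_def by (intro arg_cong2[where f="(+)"] sum.cong) auto
  finally show ?thesis .
qed

lemma sfx_app_left: "sfx a v \<Longrightarrow> sfx a (u @ v)"
  unfolding sfx_def by auto

lemma G_tree:
  assumes fa: "fval h a"
  shows "G a u (pre t) = ind (sfx a u) + Lin a (pre t)"
proof -
  obtain x r where w: "pre t = x # r" by (cases t) auto
  have fw: "fval 1 (pre t)" by (rule fval_pre)
  have key: "sfx a (u @ take (Suc j) (pre t)) \<longleftrightarrow> sfx a (take (Suc j) (pre t))" if j: "j < length r" for j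
  proof
    assume s: "sfx a (u @ take (Suc j) (pre t))"
    have "Suc j < length (pre t)" using j w by simp
    then have "sm (take (Suc j) (pre t)) > - 1" using fw unfolding fval_def by auto
    then have "sm (take (Suc j) (pre t)) \<ge> 0" by simp
    moreover have "take (Suc j) (pre t) \<noteq> []" using w by simp
    ultimately show "sfx a (take (Suc j) (pre t))" using sfx_append[OF fa _ _ s] by blast
  next
    assume "sfx a (take (Suc j) (pre t))"
    then show "sfx a (u @ take (Suc j) (pre t))" by (rule sfx_app_left)
  qed
  have len: "length (pre t) = Suc (length r)" using w by simp
  have "G a u (pre t) = ind (sfx a u) + (\<Sum>j<length r. ind (sfx a (u @ take (Suc j) (pre t))))"
    unfolding G_def len sum.lessThan_Suc_shift by simp
  also have "\<dots> = ind (sfx a u) + (\<Sum>j<length r. ind (sfx a (take (Suc j) (pre t))))"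
    using key by (intro arg_cong2[where f="(+)"] sum.cong refl) auto
  also have "\<dots> = ind (sfx a u) + Lin a (pre t)"
    unfolding Lin_def len sum.lessThan_Suc_shift by (simp add: ind_def)
  finally show ?thesis .
qed

lemma G_forest:
  assumes fa: "fval h a"
  shows "G a u (pref f) = (\<Sum>i<length f. ind (sfx a (u @ pref (take i f)))) + sum_list (map (\<lambda>t. Lin a (pre t)) f)"
proof (induction f arbitrary: u)
  case Nil then show ?case by (simp add: G_def)
next
  case (Cons t f)
  have "G a u (pref (t#f)) = G a u (pre t) + G a (u @ pre t) (pref f)"
    by (simp add: G_append)
  also have "\<dots> = ind (sfx a u) + Lin a (pre t) + ((\<Sum>i<length f. ind (sfx a (u @ pre t @ pref (take i f)))) + sum_list (map (\<lambda>t. Lin a (pre t)) f))"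
    using G_tree[OF fa] Cons.IH by simp
  also have "\<dots> = (\<Sum>i<length (t#f). ind (sfx a (u @ pref (take i (t#f))))) + sum_list (map (\<lambda>t. Lin a (pre t)) (t#f))"
    unfolding length_Cons sum.lessThan_Suc_shift by (simp add: algebra_simps)
  finally show ?case .
qed

lemma cnt_Lin:
  assumes fa: "fval h a"
  shows "cnt a t = Lin a (pre t)"
proof (induction t)
  case (Node cs)
  let ?x = "length cs"
  have len: "length (pre (Node cs)) = Suc (length (pref cs))" by simp
  have "Lin a (pre (Node cs)) = (\<Sum>j<length (pref cs). ind (sfx a (?x # take j (pref cs))))"
    unfolding Lin_def len sum.lessThan_Suc_shift by (simp add: ind_def)
  also have "\<dots> = G a [?x] (pref cs)" unfolding G_def by simp
  also have "\<dots> = (\<Sum>i<?x. ind (sfx a (?x # pref (take i cs)))) + sum_list (map (\<lambda>t. Lin a (pre t)) cs)"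
    using G_forest[OF fa] by simp
  also have "(\<Sum>i<?x. ind (sfx a (?x # pref (take i cs)))) = (\<Sum>i<?x. ind (sfx a (pref (take i cs))))"
  proof (intro sum.cong refl)
    fix i assume "i \<in> {..<?x}"
    then have i: "i < ?x" by simp
    have "sm (pref (take i cs)) = - int i" using fval_pref[of "take i cs"] i unfolding fval_def by simp
    then have "sm (?x # pref (take i cs)) \<ge> 0" using i by simp
    then have "a \<noteq> ?x # pref (take i cs)" using fval_ne[OF fa] by blast
    then show "ind (sfx a (?x # pref (take i cs))) = ind (sfx a (pref (take i cs)))"
      by (simp add: sfx_Cons)
  qed
  also have "sum_list (map (\<lambda>t. Lin a (pre t)) cs) = sum_list (map (cnt a) cs)"
    using Node by (intro arg_cong[where f=sum_list] map_cong) auto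
  finally show ?case by (simp add: card_ind)
qed



definition WW :: "nat \<Rightarrow> nat list set" where
  "WW k = {c. length c = k \<and> sum_list c = k - 1}"

definition VV :: "nat \<Rightarrow> nat list set" where
  "VV k = {w. length w = k \<and> fval 1 w}"

lemma finite_sumlists: "finite {c::nat list. length c = n \<and> sum_list c = N}"
proof (rule finite_subset)
  show "{c::nat list. length c = n \<and> sum_list c = N} \<subseteq> {c. set c \<subseteq> {..N} \<and> length c = n}"
    using member_le_sum_list by fastforce
  show "finite {c. set c \<subseteq> {..N} \<and> length c = n}" by (rule finite_lists_length_eq) simp
qed

lemma finite_WW: "finite (WW k)"
  unfolding WW_def by (rule finite_sumlists)

lemma fval1_sum: "fval 1 w \<Longrightarrow> sum_list w + 1 = length w"
  unfolding fval_def sm_eq by simp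

lemma VV_sub: "VV k \<subseteq> WW k"
  unfolding VV_def WW_def using fval1_sum by fastforce

lemma finite_VV: "finite (VV k)"
  using finite_WW VV_sub by (rule finite_subset[rotated])

lemma sum_list_rotate: "sum_list (rotate r (c::nat list)) = sum_list c"
proof -
  have "sum_list (rotate r c) = sum_list (drop (r mod length c) c) + sum_list (take (r mod length c) c)"
    by (simp add: rotate_drop_take)
  also have "\<dots> = sum_list (take (r mod length c) c) + sum_list (drop (r mod length c) c)" by (simp add: add.commute)
  also have "\<dots> = sum_list (take (r mod length c) c @ drop (r mod length c) c)" by (simp only: sum_list_append)
  finally show ?thesis by (simp only: append_take_drop_id)
qed

lemma rotate_k: "length c = k \<Longrightarrow> rotate (k + r) c = rotate r c"
  by (metis rotate_conv_mod mod_add_self1)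

lemma rotate_inv: "length c = k \<Longrightarrow> r \<le> k \<Longrightarrow> rotate (k - r) (rotate r c) = c"
  by (simp add: rotate_rotate)

lemma rotate_WW: "c \<in> WW k \<Longrightarrow> rotate r c \<in> WW k"
  unfolding WW_def by (simp add: sum_list_rotate)

lemma rot_unique:
  assumes w: "w \<in> VV k" and rw: "rotate d w \<in> VV k" and d: "d < k"
  shows "d = 0"
proof (rule ccontr)
  assume d0: "d \<noteq> 0"
  have lw: "length w = k" using w by (simp add: VV_def)
  have fw: "fval 1 w" using w by (simp add: VV_def)
  have fr: "fval 1 (rotate d w)" using rw by (simp add: VV_def)
  have rot: "rotate d w = drop d w @ take d w" using d lw by (simp add: rotate_drop_take)
  have "take (k - d) (rotate d w) = drop d w" using rot lw by simp
  moreover have "k - d < length (rotate d w)" using d0 d lw by simp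
  ultimately have "sm (drop d w) > - 1" using fr unfolding fval_def by (metis of_nat_1)
  moreover have "sm (take d w) > - 1" using fw d lw unfolding fval_def by (metis of_nat_1)
  moreover have "sm w = sm (take d w) + sm (drop d w)"
    by (metis append_take_drop_id sm_simps(3))
  moreover have "sm w = -1" using fw unfolding fval_def by simp
  ultimately show False by simp
qed

lemma rot_exists:
  assumes c: "c \<in> WW k" and k: "k \<ge> 1"
  shows "\<exists>d<k. rotate d c \<in> VV k"
proof -
  have lc: "length c = k" and sc: "sum_list c = k - 1" using c by (auto simp: WW_def)
  define S where "S j = sm (take j c)" for j
  have smc: "sm c = -1" using lc sc k by (simp add: sm_eq of_nat_diff)
  define M where "M = Min (S ` {..<k})"
  have fin: "finite (S ` {..<k})" by simp
  have "0 \<in> {..<k}" using k by simp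
  then have ne: "S ` {..<k} \<noteq> {}" by blast
  have "M \<in> S ` {..<k}" unfolding M_def using fin ne by (rule Min_in)
  then have ex: "\<exists>j. j < k \<and> S j = M" by auto
  define d where "d = (LEAST j. j < k \<and> S j = M)"
  have dk: "d < k" and Sd: "S d = M" using LeastI_ex[OF ex] by (auto simp: d_def)
  have less: "S i > S d" if "i < d" for i
  proof -
    have "i < k" using that dk by simp
    then have "S i \<ge> M" unfolding M_def using fin by auto
    moreover have "S i \<noteq> M" using not_less_Least[OF that[unfolded d_def]] \<open>i < k\<close> by auto
    ultimately show ?thesis using Sd by simp
  qed
  have le: "S i \<ge> S d" if "i < k" for i
    using that fin Sd unfolding M_def by auto
  have rot: "rotate d c = drop d c @ take d c" using dk lc by (simp add: rotate_drop_take)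
  have "fval 1 (rotate d c)" unfolding fval_def
  proof (intro conjI allI impI)
    fix j assume j: "j < length (rotate d c)"
    then have jk: "j < k" using lc by simp
    show "sm (take j (rotate d c)) > - int 1"
    proof (cases "j \<le> k - d")
      case True
      then have t: "take j (rotate d c) = take j (drop d c)" using rot lc by simp
      have "take (d + j) c = take d c @ take j (drop d c)" by (rule take_add)
      then have e: "S (d + j) = S d + sm (take j (drop d c))" by (simp add: S_def)
      show ?thesis
      proof (cases "d + j < k")
        case True
        then have "S (d + j) \<ge> S d" using le by simp
        then show ?thesis using e t by simp
      next
        case False
        then have dj: "d + j = k" using True dk by simp
        then have "S (d + j) = -1" using smc lc by (simp add: S_def)
        have "d > 0" using dj jk by simp
        then have "S 0 > S d" using less by simp
        then have "S d < 0" by (simp add: S_def)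
        then show ?thesis using e t \<open>S (d + j) = -1\<close> by simp
      qed
    next
      case False
      define i where "i = j - (k - d)"
      have id: "i < d" using False jk dk unfolding i_def by arith
      have t: "take j (rotate d c) = drop d c @ take i c"
        using rot lc False id unfolding i_def by (simp add: min_def)
      have "sm c = S d + sm (drop d c)"
        by (metis S_def append_take_drop_id sm_simps(3))
      then have "sm (take j (rotate d c)) = -1 - S d + S i" using t smc by (simp add: S_def)
      moreover have "S i > S d" using less id by simp
      ultimately show ?thesis by simp
    qed
  next
    show "sm (rotate d c) = - int 1"
      using rot smc by (metis add.commute append_take_drop_id of_nat_1 sm_simps(3))
  qed
  then show ?thesis using dk lc by (auto simp: VV_def)
qed

lemma rot_bij:
  assumes k: "k \<ge> 1"
  shows "bij_betw (\<lambda>(w, r). rotate r w) (VV k \<times> {..<k}) (WW k)"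
proof (rule bij_betw_imageI)
  show "inj_on (\<lambda>(w, r). rotate r w) (VV k \<times> {..<k})"
  proof (rule inj_onI, clarify)
    fix w r w' r' assume w: "w \<in> VV k" and r: "r < k" and w': "w' \<in> VV k" and r': "r' < k"
      and e: "rotate r w = rotate r' w'"
    have lw: "length w = k" "length w' = k" using w w' by (auto simp: VV_def)
    have "w = rotate (k - r) (rotate r w)" using rotate_inv[OF lw(1)] r by simp
    also have "\<dots> = rotate (k - r) (rotate r' w')" using e by simp
    also have "\<dots> = rotate ((k - r + r') mod k) w'"
      using lw by (metis rotate_conv_mod rotate_rotate)
    finally have ww: "w = rotate ((k - r + r') mod k) w'" .
    have "(k - r + r') mod k < k" using k by simp
    then have m0: "(k - r + r') mod k = 0" using rot_unique[OF w'] ww w by simp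
    have "r = r'"
    proof (rule ccontr)
      assume "r \<noteq> r'"
      then have A: "0 < k - r + r'" "k - r + r' < 2 * k" "k - r + r' \<noteq> k" using r r' by auto
      have "k dvd (k - r + r')" using m0 by (simp add: dvd_eq_mod_eq_0)
      then obtain q where q: "k - r + r' = k * q" by (auto elim: dvdE)
      have "q = 0 \<or> q = 1 \<or> q \<ge> 2" by arith
      moreover have "q \<ge> 2 \<Longrightarrow> k * 2 \<le> k * q" by (rule mult_le_mono2)
      ultimately show False using q A by auto
    qed
    moreover have "w = w'" using ww m0 by simp
    ultimately show "w = w' \<and> r = r'" by simp
  qed
next
  show "(\<lambda>(w, r). rotate r w) ` (VV k \<times> {..<k}) = WW k"
  proof
    show "(\<lambda>(w, r). rotate r w) ` (VV k \<times> {..<k}) \<subseteq> WW k"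
    proof (clarify)
      fix w r assume "w \<in> VV k" "r < k"
      then have "w \<in> WW k" using VV_sub by blast
      then show "rotate r w \<in> WW k" by (rule rotate_WW)
    qed
  next
    show "WW k \<subseteq> (\<lambda>(w, r). rotate r w) ` (VV k \<times> {..<k})"
    proof
      fix c assume c: "c \<in> WW k"
      obtain d where d: "d < k" "rotate d c \<in> VV k" using rot_exists[OF c k] by blast
      have lc: "length c = k" using c by (simp add: WW_def)
      have "c = rotate ((k - d) mod k) (rotate d c)"
        using lc d by (metis rotate_conv_mod length_rotate rotate_inv less_imp_le_nat)
      moreover have "(k - d) mod k < k" using k by simp
      ultimately show "c \<in> (\<lambda>(w, r). rotate r w) ` (VV k \<times> {..<k})" using d by force
    qed
  qed
qed

lemma sum_WW_VV:
  fixes g :: "nat list \<Rightarrow> real"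
  assumes k: "k \<ge> 1" and inv: "\<And>c r. length c = k \<Longrightarrow> g (rotate r c) = g c"
  shows "(\<Sum>c\<in>WW k. g c) = real k * (\<Sum>w\<in>VV k. g w)"
proof -
  have "(\<Sum>c\<in>WW k. g c) = (\<Sum>x\<in>VV k \<times> {..<k}. g ((\<lambda>(w, r). rotate r w) x))"
    by (rule sum.reindex_bij_betw[symmetric, OF rot_bij[OF k]])
  also have "\<dots> = (\<Sum>x\<in>VV k \<times> {..<k}. g (fst x))"
    by (intro sum.cong refl) (auto simp: inv VV_def)
  also have "\<dots> = (\<Sum>w\<in>VV k. \<Sum>r<k. g w)"
    unfolding sum.cartesian_product by (simp add: case_prod_beta)
  also have "\<dots> = real k * (\<Sum>w\<in>VV k. g w)"
    by (simp add: sum_distrib_left)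
  finally show ?thesis .
qed

lemma card_WW_VV: assumes k: "k \<ge> 1" shows "card (WW k) = k * card (VV k)"
proof -
  have "card (VV k \<times> {..<k}) = card (WW k)" by (rule bij_betw_same_card[OF rot_bij[OF k]])
  then show ?thesis by (simp add: card_cartesian_product mult.commute)
qed



definition win :: "nat list \<Rightarrow> nat list \<Rightarrow> nat \<Rightarrow> bool" where
  "win a c i \<longleftrightarrow> take (length a) (rotate i c) = a"

definition Nc :: "nat list \<Rightarrow> nat list \<Rightarrow> nat" where
  "Nc a c = card {i. i < length c \<and> win a c i}"

definition wcnt :: "nat \<Rightarrow> nat \<Rightarrow> nat" where
  "wcnt n N = card {c::nat list. length c = n \<and> sum_list c = N}"

lemma sum_ind_card: "finite A \<Longrightarrow> (\<Sum>c\<in>A. ind (P c)) = card {c\<in>A. P c}"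
proof -
  assume f: "finite A"
  have "(\<Sum>c\<in>A. ind (P c)) = (\<Sum>c\<in>A. if P c then 1 else 0)" by (simp add: ind_def)
  also have "\<dots> = (\<Sum>c\<in>{c\<in>A. P c}. 1)" using sum.inter_filter[OF f, of "\<lambda>_. 1::nat" P] by simp
  finally show ?thesis by simp
qed

lemma periodic_shift:
  fixes g :: "nat \<Rightarrow> 'b::cancel_comm_monoid_add"
  assumes per: "\<And>i. g (i + k) = g i"
  shows "(\<Sum>i<k. g (i + r)) = (\<Sum>i<k. g i)"
proof (induction r)
  case 0 then show ?case by simp
next
  case (Suc r)
  define h where "h i = g (i + r)" for i
  have "(\<Sum>i<Suc k. h i) = h 0 + (\<Sum>i<k. h (Suc i))" by (rule sum.lessThan_Suc_shift)
  moreover have "(\<Sum>i<Suc k. h i) = (\<Sum>i<k. h i) + h k" by simp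
  moreover have "h k = h 0" unfolding h_def using per[of r] by (simp add: add.commute)
  ultimately have "(\<Sum>i<k. h (Suc i)) = (\<Sum>i<k. h i)" by (simp add: add.commute)
  then show ?case using Suc unfolding h_def by simp
qed

lemma win_rot: "win a (rotate r c) i = win a c (i + r)"
  by (simp add: win_def rotate_rotate)

lemma win_per: "length c = k \<Longrightarrow> win a c (i + k) = win a c i"
  unfolding win_def by (metis add.commute rotate_k)

lemma Nc_sum: "Nc a c = (\<Sum>i<length c. ind (win a c i))"
  unfolding Nc_def by (rule card_ind)

lemma Nc_rot: "Nc a (rotate r c) = Nc a c"
proof -
  have "Nc a (rotate r c) = (\<Sum>i<length c. ind (win a c (i + r)))"
    by (simp add: Nc_sum win_rot)
  also have "\<dots> = (\<Sum>i<length c. ind (win a c i))"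
    by (rule periodic_shift) (simp add: win_per)
  finally show ?thesis by (simp add: Nc_sum)
qed

lemma bij_rot_WW: "bij_betw (rotate i) (WW k) (WW k)"
proof (rule bij_betw_imageI)
  show "inj_on (rotate i) (WW k)"
  proof (rule inj_onI)
    fix x y assume x: "x \<in> WW k" and y: "y \<in> WW k" and e: "rotate i x = rotate i y"
    have lx: "length x = k" and ly: "length y = k" using x y by (auto simp: WW_def)
    have "rotate (i mod k) x = rotate (i mod k) y" using e lx ly by (metis rotate_conv_mod)
    then show "x = y"
    proof (cases "k = 0")
      case True then show ?thesis using lx ly by simp
    next
      case False
      then have "i mod k \<le> k" by simp
      then show ?thesis using rotate_inv[OF lx] rotate_inv[OF ly] \<open>rotate (i mod k) x = rotate (i mod k) y\<close> by metis
    qed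
  qed
next
  show "rotate i ` WW k = WW k"
  proof
    show "rotate i ` WW k \<subseteq> WW k" using rotate_WW by auto
  next
    show "WW k \<subseteq> rotate i ` WW k"
    proof
      fix c assume c: "c \<in> WW k"
      have lc: "length c = k" using c by (simp add: WW_def)
      show "c \<in> rotate i ` WW k"
      proof (cases "k = 0")
        case True
        then have "c = []" using lc by simp
        then have "c = rotate i c" by simp
        then show ?thesis using c by blast
      next
        case False
        let ?j = "i mod k"
        have "?j \<le> k" using False by simp
        have "rotate i (rotate (k - ?j) c) = rotate ?j (rotate (k - ?j) c)"
          using lc by (metis length_rotate rotate_conv_mod)
        also have "\<dots> = rotate k c" using \<open>?j \<le> k\<close> by (simp add: rotate_rotate)
        also have "\<dots> = c" using lc by simp
        finally show ?thesis using rotate_WW[OF c] by (metis image_eqI)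
      qed
    qed
  qed
qed

lemma sum_rot_WW: "(\<Sum>c\<in>WW k. f (rotate i c)) = (\<Sum>c\<in>WW k. (f c::'b::comm_monoid_add))"
  by (rule sum.reindex_bij_betw[OF bij_rot_WW])

lemma moment1:
  "(\<Sum>c\<in>WW k. Nc a c) = k * card {c\<in>WW k. win a c 0}"
proof -
  have "(\<Sum>c\<in>WW k. Nc a c) = (\<Sum>c\<in>WW k. \<Sum>i<k. ind (win a c i))"
    by (intro sum.cong refl) (simp add: Nc_sum WW_def)
  also have "\<dots> = (\<Sum>i<k. \<Sum>c\<in>WW k. ind (win a c i))" by (rule sum.swap)
  also have "\<dots> = (\<Sum>i<k. \<Sum>c\<in>WW k. ind (win a (rotate i c) 0))"
    by (simp add: win_rot)
  also have "\<dots> = (\<Sum>i<k. \<Sum>c\<in>WW k. ind (win a c 0))"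
    by (rule sum.cong[OF refl], rule sum_rot_WW)
  also have "\<dots> = k * card {c\<in>WW k. win a c 0}"
    using finite_WW by (simp add: sum_ind_card)
  finally show ?thesis .
qed

lemma moment2:
  "(\<Sum>c\<in>WW k. (Nc a c)^2) = k * (\<Sum>d<k. card {c\<in>WW k. win a c 0 \<and> win a c d})"
proof -
  have sq: "(Nc a c)^2 = (\<Sum>i<k. \<Sum>d<k. ind (win a (rotate i c) 0 \<and> win a (rotate i c) d))"
    if c: "c \<in> WW k" for c
  proof -
    have lc: "length c = k" using c by (simp add: WW_def)
    have "(Nc a c)^2 = (\<Sum>i<k. ind (win a c i)) * (\<Sum>j<k. ind (win a c j))"
      by (simp add: Nc_sum lc power2_eq_square)
    also have "\<dots> = (\<Sum>i<k. ind (win a c i) * (\<Sum>j<k. ind (win a c j)))"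
      by (simp add: sum_distrib_right)
    also have "\<dots> = (\<Sum>i<k. ind (win a c i) * (\<Sum>d<k. ind (win a c (d + i))))"
    proof (rule sum.cong[OF refl])
      fix i
      have "(\<Sum>j<k. ind (win a c j)) = (\<Sum>d<k. ind (win a c (d + i)))"
        by (rule periodic_shift[symmetric]) (simp add: win_per lc)
      then show "ind (win a c i) * (\<Sum>j<k. ind (win a c j)) = ind (win a c i) * (\<Sum>d<k. ind (win a c (d + i)))"
        by simp
    qed
    also have "\<dots> = (\<Sum>i<k. \<Sum>d<k. ind (win a c i) * ind (win a c (d + i)))"
      by (simp add: sum_distrib_left)
    also have "\<dots> = (\<Sum>i<k. \<Sum>d<k. ind (win a (rotate i c) 0 \<and> win a (rotate i c) d))"
      by (intro sum.cong refl) (simp add: win_rot ind_def)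
    finally show ?thesis .
  qed
  have "(\<Sum>c\<in>WW k. (Nc a c)^2) = (\<Sum>c\<in>WW k. \<Sum>i<k. \<Sum>d<k. ind (win a (rotate i c) 0 \<and> win a (rotate i c) d))"
    using sq by (rule sum.cong[OF refl])
  also have "\<dots> = (\<Sum>i<k. \<Sum>c\<in>WW k. \<Sum>d<k. ind (win a (rotate i c) 0 \<and> win a (rotate i c) d))"
    by (rule sum.swap)
  also have "\<dots> = (\<Sum>i<k. \<Sum>c\<in>WW k. \<Sum>d<k. ind (win a c 0 \<and> win a c d))"
    by (rule sum.cong[OF refl], rule sum_rot_WW[where f="\<lambda>c. \<Sum>d<k. ind (win a c 0 \<and> win a c d)"])
  also have "\<dots> = k * (\<Sum>c\<in>WW k. \<Sum>d<k. ind (win a c 0 \<and> win a c d))" by simp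
  also have "(\<Sum>c\<in>WW k. \<Sum>d<k. ind (win a c 0 \<and> win a c d)) = (\<Sum>d<k. \<Sum>c\<in>WW k. ind (win a c 0 \<and> win a c d))"
    by (rule sum.swap)
  also have "\<dots> = (\<Sum>d<k. card {c\<in>WW k. win a c 0 \<and> win a c d})"
    using finite_WW by (simp add: sum_ind_card)
  finally show ?thesis .
qed



lemma sumlists_Suc:
  "{c::nat list. length c = Suc n \<and> sum_list c = N} = (\<Union>x\<in>{..N}. Cons x ` {c. length c = n \<and> sum_list c = N - x})"
proof
  show "{c::nat list. length c = Suc n \<and> sum_list c = N} \<subseteq> (\<Union>x\<in>{..N}. Cons x ` {c. length c = n \<and> sum_list c = N - x})"
  proof
    fix c :: "nat list" assume "c \<in> {c. length c = Suc n \<and> sum_list c = N}"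
    then obtain x c' where "c = x # c'" "length c' = n" "x + sum_list c' = N"
      by (cases c) auto
    then show "c \<in> (\<Union>x\<in>{..N}. Cons x ` {c. length c = n \<and> sum_list c = N - x})" by force
  qed
next
  show "(\<Union>x\<in>{..N}. Cons x ` {c. length c = n \<and> sum_list c = N - x}) \<subseteq> {c::nat list. length c = Suc n \<and> sum_list c = N}"
    by auto
qed

lemma wcnt_Suc_sum: "wcnt (Suc n) N = (\<Sum>x\<le>N. wcnt n (N - x))"
proof -
  have "wcnt (Suc n) N = card (\<Union>x\<in>{..N}. Cons x ` {c::nat list. length c = n \<and> sum_list c = N - x})"
    unfolding wcnt_def sumlists_Suc ..
  also have "\<dots> = (\<Sum>x\<le>N. card (Cons x ` {c::nat list. length c = n \<and> sum_list c = N - x}))"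
    by (rule card_UN_disjoint) (auto intro: finite_sumlists)
  also have "\<dots> = (\<Sum>x\<le>N. wcnt n (N - x))"
    unfolding wcnt_def by (intro sum.cong refl card_image) auto
  finally show ?thesis .
qed

lemma wcnt_formula: "wcnt (Suc n) N = (N + n) choose N"
proof (induction n arbitrary: N)
  case 0
  have "{c::nat list. length c = Suc 0 \<and> sum_list c = N} = {[N]}"
  proof
    show "{c::nat list. length c = Suc 0 \<and> sum_list c = N} \<subseteq> {[N]}"
    proof
      fix c :: "nat list" assume "c \<in> {c. length c = Suc 0 \<and> sum_list c = N}"
      then show "c \<in> {[N]}" by (cases c) auto
    qed
  qed auto
  then show ?case by (simp add: wcnt_def)
next
  case (Suc n)
  have "wcnt (Suc (Suc n)) N = (\<Sum>x\<le>N. (N - x + n) choose (N - x))"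
    by (subst wcnt_Suc_sum) (simp only: Suc.IH)
  also have "\<dots> = (\<Sum>x\<in>{0..N}. (N - x + n) choose (N - x))" by (simp add: atMost_atLeast0)
  also have "\<dots> = (\<Sum>x\<in>{0..N}. (N - (N + 0 - x) + n) choose (N - (N + 0 - x)))"
    by (rule sum.atLeastAtMost_rev)
  also have "\<dots> = (\<Sum>x\<le>N. (n + x) choose x)"
    by (simp add: atMost_atLeast0 add.commute)
  also have "\<dots> = Suc (n + N) choose N" by (rule sum_choose_lower)
  finally show ?case by (simp add: add.commute)
qed

lemma card_single:
  assumes m: "length a \<le> n" and s: "sum_list a \<le> N"
  shows "card {c. length c = n \<and> sum_list c = N \<and> take (length a) c = a} = wcnt (n - length a) (N - sum_list a)"
proof -
  let ?m = "length a"
  have "bij_betw (drop ?m) {c. length c = n \<and> sum_list c = N \<and> take ?m c = a}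
          {c::nat list. length c = n - ?m \<and> sum_list c = N - sum_list a}"
  proof (rule bij_betw_byWitness[where f'="\<lambda>w. a @ w"])
    show "\<forall>c\<in>{c. length c = n \<and> sum_list c = N \<and> take ?m c = a}. a @ drop ?m c = c"
      by (metis (mono_tags, lifting) append_take_drop_id mem_Collect_eq)
    show "\<forall>w\<in>{c::nat list. length c = n - ?m \<and> sum_list c = N - sum_list a}. drop ?m (a @ w) = w"
      by simp
    show "drop ?m ` {c. length c = n \<and> sum_list c = N \<and> take ?m c = a}
          \<subseteq> {c::nat list. length c = n - ?m \<and> sum_list c = N - sum_list a}"
    proof
      fix y assume "y \<in> drop ?m ` {c. length c = n \<and> sum_list c = N \<and> take ?m c = a}"
      then obtain c where c: "length c = n" "sum_list c = N" "take ?m c = a" and y: "y = drop ?m c" by blast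
      have "sum_list c = sum_list (take ?m c) + sum_list (drop ?m c)"
        by (metis append_take_drop_id sum_list_append)
      then show "y \<in> {c::nat list. length c = n - ?m \<and> sum_list c = N - sum_list a}" using c y by simp
    qed
    show "(\<lambda>w. a @ w) ` {c::nat list. length c = n - ?m \<and> sum_list c = N - sum_list a}
          \<subseteq> {c. length c = n \<and> sum_list c = N \<and> take ?m c = a}"
      using m s by auto
  qed
  then show ?thesis unfolding wcnt_def by (rule bij_betw_same_card)
qed

lemma card_double:
  assumes m: "length a \<le> d" "d + length a \<le> n" and s: "2 * sum_list a \<le> N"
  shows "card {c. length c = n \<and> sum_list c = N \<and> take (length a) c = a \<and> take (length a) (drop d c) = a}
        = wcnt (n - 2 * length a) (N - 2 * sum_list a)"
proof -
  let ?m = "length a"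
  let ?A = "{c. length c = n \<and> sum_list c = N \<and> take ?m c = a \<and> take ?m (drop d c) = a}"
  let ?B = "{c::nat list. length c = n - 2 * ?m \<and> sum_list c = N - 2 * sum_list a}"
  let ?f = "\<lambda>c. take (d - ?m) (drop ?m c) @ drop (d + ?m) c"
  let ?g = "\<lambda>w. a @ take (d - ?m) w @ a @ drop (d - ?m) w"
  have dec: "c = a @ take (d - ?m) (drop ?m c) @ a @ drop (d + ?m) c" if c: "c \<in> ?A" for c
  proof -
    have c1: "take ?m c = a" and c2: "take ?m (drop d c) = a" using c by auto
    have "drop d c = a @ drop (d + ?m) c"
      using c2 by (metis append_take_drop_id drop_drop add.commute)
    moreover have "drop ?m c = take (d - ?m) (drop ?m c) @ drop d c"
      using m by (metis append_take_drop_id drop_drop le_add_diff_inverse2)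
    moreover have "c = a @ drop ?m c" using c1 by (metis append_take_drop_id)
    ultimately show ?thesis by simp
  qed
  have "bij_betw ?f ?A ?B"
  proof (rule bij_betw_byWitness[where f'="?g"])
    show "\<forall>c\<in>?A. ?g (?f c) = c"
    proof
      fix c assume c: "c \<in> ?A"
      have ln: "length c = n" using c by simp
      have lt: "length (take (d - ?m) (drop ?m c)) = d - ?m" using m ln by simp
      show "?g (?f c) = c" using dec[OF c] lt by simp
    qed
    show "\<forall>w\<in>?B. ?f (?g w) = w"
    proof
      fix w assume w: "w \<in> ?B"
      have lt: "length (take (d - ?m) w) = d - ?m" using w m by simp
      have "drop ?m (?g w) = take (d - ?m) w @ a @ drop (d - ?m) w" by simp
      then have "take (d - ?m) (drop ?m (?g w)) = take (d - ?m) w" using lt by simp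
      moreover have "drop (d + ?m) (?g w) = drop (d - ?m) w"
      proof -
        have idx: "?m + (d - ?m + ?m) = d + ?m" using m by simp
        have "drop (d + ?m) (?g w) = drop ?m (drop (d - ?m) (drop ?m (?g w)))"
          by (simp only: drop_drop idx)
        also have "\<dots> = drop (d - ?m) w" using lt by simp
        finally show ?thesis .
      qed
      ultimately show "?f (?g w) = w" by (simp only: append_take_drop_id)
    qed
    show "?f ` ?A \<subseteq> ?B"
    proof
      fix y assume "y \<in> ?f ` ?A"
      then obtain c where cA: "c \<in> ?A" and y: "y = ?f c" by blast
      then have c: "length c = n" "sum_list c = N" "take ?m c = a" "take ?m (drop d c) = a" by auto
      have "sum_list c = sum_list a + sum_list (take (d - ?m) (drop ?m c)) + sum_list a + sum_list (drop (d + ?m) c)"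
        using arg_cong[OF dec[OF cA], of sum_list] by simp
      then have "sum_list (?f c) = N - 2 * sum_list a" using c by simp
      moreover have "length (?f c) = n - 2 * ?m" using c m by simp
      ultimately show "y \<in> ?B" using y by simp
    qed
    show "?g ` ?B \<subseteq> ?A"
    proof
      fix y assume "y \<in> ?g ` ?B"
      then obtain w where w: "length w = n - 2 * ?m" "sum_list w = N - 2 * sum_list a" and y: "y = ?g w" by blast
      have lt: "length (take (d - ?m) w) = d - ?m" using w m by simp
      have sw: "sum_list w = sum_list (take (d - ?m) w) + sum_list (drop (d - ?m) w)"
        by (metis append_take_drop_id sum_list_append)
      have "length (?g w) = n" using w m by simp
      moreover have "sum_list (?g w) = N" using w s sw by simp
      moreover have "take ?m (?g w) = a" by simp
      moreover have "take ?m (drop d (?g w)) = a"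
      proof -
        have idx: "d - ?m + ?m = d" using m by simp
        have "drop d (?g w) = drop (d - ?m) (drop ?m (?g w))" by (simp only: drop_drop idx)
        also have "\<dots> = a @ drop (d - ?m) w" using lt by simp
        finally show ?thesis by simp
      qed
      ultimately show "y \<in> ?A" using y by simp
    qed
  qed
  then show ?thesis unfolding wcnt_def by (rule bij_betw_same_card)
qed



lemma lim_half:
  fixes p q :: nat
  shows "(\<lambda>k. real (k - p) / real (2 * k - q)) \<longlonglongrightarrow> 1 / 2"
proof -
  have lim: "(\<lambda>k. (1 - real p / real k) / (2 - real q / real k)) \<longlonglongrightarrow> (1 - 0) / (2 - 0)"
    by (intro tendsto_intros) auto
  have ev: "eventually (\<lambda>k. (1 - real p / real k) / (2 - real q / real k) = real (k - p) / real (2 * k - q)) sequentially"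
  proof (rule eventually_sequentiallyI[of "p + q + 1"])
    fix k :: nat assume k: "p + q + 1 \<le> k"
    then have k0: "real k > 0" by simp
    have h1: "real (k - p) = real k - real p" using k by (simp add: of_nat_diff)
    have h2: "real (2 * k - q) = 2 * real k - real q" using k by (simp add: of_nat_diff)
    have d: "2 * real k - real q > 0" using k by simp
    have e1: "1 - real p / real k = (real k - real p) / real k" using k0 by (simp add: field_simps)
    have e2: "2 - real q / real k = (2 * real k - real q) / real k" using k0 by (simp add: field_simps)
    have h3: "(1 - real p / real k) / (2 - real q / real k) = (real k - real p) / (2 * real k - real q)"
      unfolding e1 e2 using k0 d by simp
    show "(1 - real p / real k) / (2 - real q / real k) = real (k - p) / real (2 * k - q)" using h1 h2 h3 by simp
  qed
  show ?thesis using tendsto_cong[OF ev] lim by simp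
qed

definition BB :: "nat \<Rightarrow> nat \<Rightarrow> nat \<Rightarrow> real" where
  "BB l r k = real ((2 * k - 2 - l - r) choose (k - 1 - r))"

lemma BB_Suc_l:
  assumes k: "l + r + 3 \<le> k"
  shows "BB (Suc l) r k = BB l r k * (real (k - (1 + l)) / real (2 * k - (2 + l + r)))"
proof -
  define n where "n = 2 * k - 2 - l - r"
  define j where "j = k - 1 - r"
  have nj: "n - j = k - (1 + l)" using k unfolding n_def j_def by simp
  have n1: "n - 1 = 2 * k - 2 - Suc l - r" using k unfolding n_def by simp
  have npos: "n > 0" using k unfolding n_def by simp
  have "(n - j) * (n choose j) = n * ((n - 1) choose j)" by (rule binomial_absorb_comp)
  then have "real n * real ((n - 1) choose j) = real (n - j) * real (n choose j)"
    by (metis of_nat_mult)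
  then have "real ((n - 1) choose j) = real (n choose j) * (real (n - j) / real n)"
    using npos by (simp add: field_simps)
  moreover have "real n = real (2 * k - (2 + l + r))" unfolding n_def by (simp add: diff_diff_add)
  ultimately show ?thesis unfolding BB_def using nj n1 unfolding n_def j_def by simp
qed

lemma BB_Suc_r:
  assumes k: "l + r + 3 \<le> k"
  shows "BB l (Suc r) k = BB l r k * (real (k - (1 + r)) / real (2 * k - (2 + l + r)))"
proof -
  define n where "n = 2 * k - 2 - l - r"
  define j where "j = k - 1 - Suc r"
  have sj: "Suc j = k - 1 - r" using k unfolding j_def by simp
  have n1: "n - 1 = 2 * k - 2 - l - Suc r" using k unfolding n_def by simp
  have npos: "n > 0" using k unfolding n_def by simp
  have "Suc j * (n choose Suc j) = n * ((n - 1) choose j)" by (rule binomial_absorption)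
  then have "real n * real ((n - 1) choose j) = real (Suc j) * real (n choose Suc j)"
    by (metis of_nat_mult)
  then have "real ((n - 1) choose j) = real (n choose Suc j) * (real (Suc j) / real n)"
    using npos by (simp add: field_simps)
  moreover have "real n = real (2 * k - (2 + l + r))" unfolding n_def by (simp add: diff_diff_add)
  moreover have "Suc j = k - (1 + r)" using sj by simp
  ultimately show ?thesis unfolding BB_def using sj n1 unfolding n_def j_def by simp
qed

lemma BB00_pos: "k \<ge> 1 \<Longrightarrow> BB 0 0 k > 0"
  unfolding BB_def by simp

lemma BB_lim: "(\<lambda>k. BB l r k / BB 0 0 k) \<longlonglongrightarrow> (1/2)^(l + r)"
proof (induction l)
  case 0
  show ?case
  proof (induction r)
    case 0
    have ev: "eventually (\<lambda>k. 1 = BB 0 0 k / BB 0 0 k) sequentially"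
      by (rule eventually_sequentiallyI[of 1]) (use BB00_pos in force)
    have "(\<lambda>k. 1::real) \<longlonglongrightarrow> 1" by simp
    then have "(\<lambda>k. BB 0 0 k / BB 0 0 k) \<longlonglongrightarrow> 1" using tendsto_cong[OF ev] by blast
    moreover have "(1::real) = (1/2)^(0+0)" by simp
    ultimately show ?case by metis
  next
    case (Suc r)
    have ev: "eventually (\<lambda>k. BB 0 r k / BB 0 0 k * (real (k - (1 + r)) / real (2 * k - (2 + 0 + r)))
                = BB 0 (Suc r) k / BB 0 0 k) sequentially"
      by (rule eventually_sequentiallyI[of "r + 3"]) (simp add: BB_Suc_r)
    have "(\<lambda>k. BB 0 r k / BB 0 0 k * (real (k - (1 + r)) / real (2 * k - (2 + 0 + r)))) \<longlonglongrightarrow> (1/2)^(0 + r) * (1/2)"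
      by (intro tendsto_mult Suc lim_half)
    then show ?case using tendsto_cong[OF ev] by simp
  qed
next
  case (Suc l)
  have ev: "eventually (\<lambda>k. BB l r k / BB 0 0 k * (real (k - (1 + l)) / real (2 * k - (2 + l + r)))
              = BB (Suc l) r k / BB 0 0 k) sequentially"
    by (rule eventually_sequentiallyI[of "l + r + 3"]) (simp add: BB_Suc_l)
  have "(\<lambda>k. BB l r k / BB 0 0 k * (real (k - (1 + l)) / real (2 * k - (2 + l + r)))) \<longlonglongrightarrow> (1/2)^(l + r) * (1/2)"
    by (intro tendsto_mult Suc lim_half)
  then show ?case using tendsto_cong[OF ev] by simp
qed

lemma wcnt_BB: "l + r + 2 \<le> k \<Longrightarrow> real (wcnt (k - l) (k - 1 - r)) = BB l r k"
proof -
  assume k: "l + r + 2 \<le> k"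
  then have "k - l = Suc (k - l - 1)" by simp
  then have "wcnt (k - l) (k - 1 - r) = (k - 1 - r + (k - l - 1)) choose (k - 1 - r)"
    by (simp add: wcnt_formula)
  moreover have "k - 1 - r + (k - l - 1) = 2 * k - 2 - l - r" using k by simp
  ultimately show ?thesis unfolding BB_def by simp
qed

lemma wcnt_ratio:
  "(\<lambda>k. real (wcnt (k - l) (k - 1 - r)) / real (wcnt k (k - 1))) \<longlonglongrightarrow> (1/2)^(l + r)"
proof -
  have ev: "eventually (\<lambda>k. BB l r k / BB 0 0 k = real (wcnt (k - l) (k - 1 - r)) / real (wcnt k (k - 1))) sequentially"
  proof (rule eventually_sequentiallyI[of "l + r + 2"])
    fix k assume k: "l + r + 2 \<le> k"
    show "BB l r k / BB 0 0 k = real (wcnt (k - l) (k - 1 - r)) / real (wcnt k (k - 1))"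
      using wcnt_BB[OF k] wcnt_BB[of 0 0 k] k by simp
  qed
  show ?thesis using tendsto_cong[OF ev] BB_lim[of l r] by blast
qed



lemma rho_Lin:
  assumes t: "t \<in> plane_trees k"
  shows "rho F t = real (Lin (pref F) (pre t)) / real k"
proof -
  have "{p. is_pos t p \<and> p \<noteq> [] \<and> fsize (Fv t p) \<ge> fsize F \<and> last_sub (fsize F) (Fv t p) = F} = posset F t"
    unfolding posset_def Q_def by auto
  moreover have "card (posset F t) = Lin (pref F) (pre t)"
    using card_posset cnt_Lin[OF fval_pref] by simp
  moreover have "nverts t = k" using t by (simp add: plane_trees_def)
  ultimately show ?thesis unfolding rho_def by simp
qed

lemma sfx_win:
  assumes j: "j < length w" "length a \<le> j"
  shows "sfx a (take j w) \<longleftrightarrow> win a w (j - length a)"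
proof -
  let ?m = "length a" and ?i = "j - length a"
  have "drop ?i (take j w) = take ?m (drop ?i w)" using j by (simp add: drop_take)
  moreover have "rotate ?i w = drop ?i w @ take ?i w" using j by (simp add: rotate_drop_take)
  moreover have "length (drop ?i w) \<ge> ?m" using j by simp
  ultimately have "take ?m (rotate ?i w) = drop ?i (take j w)" by simp
  moreover have "length (take j w) - ?m = ?i" using j by simp
  ultimately show ?thesis unfolding sfx_def win_def using j by simp
qed

lemma Lin_Nc:
  shows "Lin a w \<le> Nc a w \<and> Nc a w \<le> Lin a w + length a + 1"
proof -
  let ?k = "length w" and ?m = "length a"
  define A where "A = {j. j < ?k \<and> (1 \<le> j \<and> sfx a (take j w))}"
  define B where "B = {i. i < ?k \<and> win a w i}"
  have LA: "Lin a w = card A" unfolding Lin_def A_def by (rule card_ind[symmetric])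
  have NB: "Nc a w = card B" unfolding Nc_def B_def ..
  have Am: "j \<in> A \<Longrightarrow> ?m \<le> j" for j unfolding A_def sfx_def by simp
  have inj: "inj_on (\<lambda>j. j - ?m) A"
  proof (rule inj_onI)
    fix x y assume "x \<in> A" "y \<in> A" "x - ?m = y - ?m"
    moreover have "?m \<le> x" "?m \<le> y" using Am \<open>x \<in> A\<close> \<open>y \<in> A\<close> by auto
    ultimately show "x = y" by simp
  qed
  have imB: "(\<lambda>j. j - ?m) ` A \<subseteq> B"
  proof
    fix i assume "i \<in> (\<lambda>j. j - ?m) ` A"
    then obtain j where jA: "j \<in> A" and i: "i = j - ?m" by blast
    have j: "j < ?k" "?m \<le> j" using jA Am by (auto simp: A_def)
    then have "win a w i" using jA sfx_win[OF j] i by (simp add: A_def)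
    then show "i \<in> B" using j i by (simp add: B_def)
  qed
  have finB: "finite B" by (simp add: B_def)
  have c1: "card A \<le> card B"
    using card_inj_on_le[OF inj imB finB] .
  have Bsub: "B \<subseteq> (\<lambda>j. j - ?m) ` A \<union> {?k - ?m..<?k} \<union> {0}"
  proof
    fix i assume iB: "i \<in> B"
    then have i: "i < ?k" "win a w i" by (auto simp: B_def)
    show "i \<in> (\<lambda>j. j - ?m) ` A \<union> {?k - ?m..<?k} \<union> {0}"
    proof (cases "i + ?m < ?k \<and> i + ?m \<ge> 1")
      case True
      then have j: "i + ?m < ?k" "?m \<le> i + ?m" by auto
      have "sfx a (take (i + ?m) w)" using sfx_win[OF j] i by simp
      then have "i + ?m \<in> A" using True by (simp add: A_def)
      then show ?thesis by force
    next
      case False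
      then show ?thesis using i by auto
    qed
  qed
  have finA: "finite A" by (simp add: A_def)
  have "card B \<le> card ((\<lambda>j. j - ?m) ` A \<union> {?k - ?m..<?k} \<union> {0})"
    by (rule card_mono[OF _ Bsub]) (simp add: finA)
  also have "\<dots> \<le> card ((\<lambda>j. j - ?m) ` A) + card {?k - ?m..<?k} + card {0::nat}"
    by (meson card_Un_le le_trans add_le_mono order_refl)
  also have "\<dots> \<le> card A + ?m + 1"
    using card_image_le[OF finA, of "\<lambda>j. j - ?m"] by simp
  finally have c2: "card B \<le> card A + ?m + 1" .
  show ?thesis using c1 c2 LA NB by simp
qed



lemma win0: "win a c 0 \<longleftrightarrow> take (length a) c = a"
  by (simp add: win_def)

lemma wind: "d < length c \<Longrightarrow> d + length a \<le> length c \<Longrightarrow> win a c d \<longleftrightarrow> take (length a) (drop d c) = a"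
  by (simp add: win_def rotate_drop_take)

lemma w1_eq:
  assumes "length a \<le> k" "sum_list a \<le> k - 1"
  shows "card {c\<in>WW k. win a c 0} = wcnt (k - length a) (k - 1 - sum_list a)"
proof -
  have "{c\<in>WW k. win a c 0} = {c. length c = k \<and> sum_list c = k - 1 \<and> take (length a) c = a}"
    by (auto simp: WW_def win0)
  then show ?thesis using card_single[OF assms] by simp
qed

lemma sum_if_const: "(\<Sum>d<(k::nat). if P d then (c::nat) else 0) = c * card {d. d < k \<and> P d}"
proof -
  have "(\<Sum>d<k. if P d then c else 0) = (\<Sum>d<k. c * ind (P d))"
    by (intro sum.cong refl) (simp add: ind_def)
  also have "\<dots> = c * (\<Sum>d<k. ind (P d))" by (simp add: sum_distrib_left)
  finally show ?thesis by (simp add: card_ind)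
qed

lemma moment2_bound:
  assumes k1: "k \<ge> 1" and km: "2 * length a \<le> k" and ks: "2 * sum_list a + 1 \<le> k"
  shows "(\<Sum>d<k. card {c\<in>WW k. win a c 0 \<and> win a c d})
          \<le> k * wcnt (k - 2 * length a) (k - 1 - 2 * sum_list a) + 2 * length a * card (WW k)"
proof -
  let ?m = "length a"
  let ?w2 = "wcnt (k - 2 * length a) (k - 1 - 2 * sum_list a)"
  let ?bad = "\<lambda>d. d < ?m \<or> k < d + ?m"
  have each: "card {c\<in>WW k. win a c 0 \<and> win a c d} \<le> ?w2 + (if ?bad d then card (WW k) else 0)"
    if d: "d < k" for d
  proof (cases "?bad d")
    case True
    have "card {c\<in>WW k. win a c 0 \<and> win a c d} \<le> card (WW k)"
      by (rule card_mono[OF finite_WW]) auto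
    then show ?thesis using True by simp
  next
    case False
    have "{c\<in>WW k. win a c 0 \<and> win a c d} = {c. length c = k \<and> sum_list c = k - 1 \<and> take ?m c = a \<and> take ?m (drop d c) = a}"
      using False d by (auto simp: WW_def win0 wind)
    moreover have "card {c. length c = k \<and> sum_list c = k - 1 \<and> take ?m c = a \<and> take ?m (drop d c) = a} = ?w2"
      by (rule card_double) (use False ks in auto)
    ultimately show ?thesis by simp
  qed
  have "(\<Sum>d<k. card {c\<in>WW k. win a c 0 \<and> win a c d}) \<le> (\<Sum>d<k. ?w2 + (if ?bad d then card (WW k) else 0))"
    using each by (intro sum_mono) auto
  also have "\<dots> = k * ?w2 + card (WW k) * card {d. d < k \<and> ?bad d}"
    by (simp add: sum.distrib sum_if_const)
  also have "card {d. d < k \<and> ?bad d} \<le> 2 * ?m"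
  proof -
    have "{d. d < k \<and> ?bad d} \<subseteq> {..<?m} \<union> {k - ?m..<k}" by auto
    then have "card {d. d < k \<and> ?bad d} \<le> card ({..<?m} \<union> {k - ?m..<k})"
      by (intro card_mono) auto
    also have "\<dots> \<le> card {..<?m} + card {k - ?m..<k}" by (rule card_Un_le)
    also have "\<dots> \<le> 2 * ?m" by simp
    finally show ?thesis .
  qed
  then have "k * ?w2 + card (WW k) * card {d. d < k \<and> ?bad d} \<le> k * ?w2 + card (WW k) * (2 * ?m)"
    by (intro add_left_mono mult_left_mono) auto
  finally show ?thesis by (simp add: mult.commute mult.left_commute)
qed



theorem proposition9:
  fixes F :: "ptree list"
  shows "\<forall>\<epsilon>>0. \<exists>K. \<forall>k\<ge>K.
    real (card {t \<in> plane_trees k.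
        \<bar>rho F t - 1 / 2 ^ (2 * fsize F - length F)\<bar> \<le> \<epsilon>})
      / real (card (plane_trees k)) > 1 - \<epsilon>"
proof (intro allI impI)
  fix \<epsilon> :: real assume ep: "\<epsilon> > 0"
  define a where "a = pref F"
  define m where "m = length a"
  define s where "s = sum_list a"
  define h where "h = length F"
  have fa: "fval h a" unfolding a_def h_def by (rule fval_pref)
  have sh: "s + h = m"
  proof -
    have "sm a = - int h" using fa by (simp add: fval_def)
    then show ?thesis unfolding s_def m_def sm_eq by simp
  qed
  have mF: "fsize F = m" unfolding m_def a_def by (simp add: length_pref)
  define \<mu> where "\<mu> = (1/2::real)^(m + s)"
  have mu_eq: "1 / 2 ^ (2 * fsize F - length F) = \<mu>"
  proof -
    have "2 * fsize F - length F = m + s" using mF sh h_def by simp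
    then show ?thesis unfolding \<mu>_def by (simp add: power_one_over)
  qed
  have mu0: "\<mu> \<ge> 0" unfolding \<mu>_def by simp
  define p1 where "p1 k = real (wcnt (k - m) (k - 1 - s)) / real (wcnt k (k - 1))" for k
  define p2 where "p2 k = real (wcnt (k - 2 * m) (k - 1 - 2 * s)) / real (wcnt k (k - 1))" for k
  define E where "E k = p2 k + real (2 * m) / real k - 2 * \<mu> * p1 k + \<mu>^2" for k
  have lp1: "p1 \<longlonglongrightarrow> \<mu>" unfolding p1_def \<mu>_def by (rule wcnt_ratio)
  have lp2: "p2 \<longlonglongrightarrow> \<mu>^2"
  proof -
    have "p2 \<longlonglongrightarrow> (1/2)^(2 * m + 2 * s)" unfolding p2_def by (rule wcnt_ratio)
    moreover have "(1/2::real)^(2 * m + 2 * s) = \<mu>^2" unfolding \<mu>_def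
      by (simp add: power_mult[symmetric] mult.commute distrib_left)
    ultimately show ?thesis by simp
  qed
  have lE: "E \<longlonglongrightarrow> \<mu>^2 + 0 - 2 * \<mu> * \<mu> + \<mu>^2"
    unfolding E_def by (intro tendsto_intros lp1 lp2)
  then have lE0: "E \<longlonglongrightarrow> 0" by (simp add: power2_eq_square)
  have e34: "0 < \<epsilon>^3 / 4" using ep by simp
  have ev1: "eventually (\<lambda>k. E k < \<epsilon>^3 / 4) sequentially"
    using order_tendstoD(2)[OF lE0 e34] .
  have "(\<lambda>k. real (m + 1) / real k) \<longlonglongrightarrow> 0" by (rule lim_const_over_n)
  moreover have e2: "0 < \<epsilon> / 2" using ep by simp
  ultimately have ev2: "eventually (\<lambda>k. real (m + 1) / real k < \<epsilon> / 2) sequentially"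
    by (rule order_tendstoD(2))
  have ev3: "eventually (\<lambda>k. 2 * m + 2 * s + 2 \<le> k) sequentially"
    by (rule eventually_ge_at_top)
  obtain K where K: "\<And>k. k \<ge> K \<Longrightarrow> E k < \<epsilon>^3 / 4 \<and> real (m + 1) / real k < \<epsilon> / 2 \<and> 2 * m + 2 * s + 2 \<le> k"
    using eventually_conj[OF ev1 eventually_conj[OF ev2 ev3]] unfolding eventually_sequentially by blast
  show "\<exists>K. \<forall>k\<ge>K. real (card {t \<in> plane_trees k. \<bar>rho F t - 1 / 2 ^ (2 * fsize F - length F)\<bar> \<le> \<epsilon>})
      / real (card (plane_trees k)) > 1 - \<epsilon>"
  proof (intro exI allI impI)
    fix k assume kK: "k \<ge> K"
    have Ek: "E k < \<epsilon>^3 / 4" and mk: "real (m + 1) / real k < \<epsilon> / 2" and kb: "2 * m + 2 * s + 2 \<le> k"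
      using K[OF kK] by auto
    have k1: "k \<ge> 1" using kb by simp
    have kpos: "real k > 0" using k1 by simp
    let ?T = "plane_trees k"
    have injT: "inj_on pre ?T" by (rule inj_pre)
    have imT: "pre ` ?T = VV k" unfolding VV_def by (rule pre_image)
    have finT: "finite ?T" using finite_VV imT injT by (metis finite_imageD)
    have cT: "card ?T = card (VV k)" using card_image[OF injT] imT by simp
    have nW: "card (WW k) = wcnt k (k - 1)" by (simp add: WW_def wcnt_def)
    have nWpos: "wcnt k (k - 1) > 0"
    proof -
      have "k = Suc (k - 1)" using k1 by simp
      then have "wcnt k (k - 1) = (k - 1 + (k - 1)) choose (k - 1)" by (metis wcnt_formula)
      then show ?thesis by simp
    qed
    have cWT: "card (WW k) = k * card ?T" using card_WW_VV[OF k1] cT by simp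
    have nTpos: "card ?T > 0" using cWT nW nWpos by (metis mult_0_right neq0_conv)
    define X where "X c = real (Nc a c) / real k - \<mu>" for c
    have Xrot: "X (rotate r c) = X c" for r c unfolding X_def by (simp add: Nc_rot)
    have s1: "(\<Sum>t\<in>?T. (X (pre t))^2) = (\<Sum>w\<in>VV k. (X w)^2)"
      using sum.reindex[OF injT, of "\<lambda>w. (X w)^2"] imT by simp
    have s2: "(\<Sum>c\<in>WW k. (X c)^2) = real k * (\<Sum>w\<in>VV k. (X w)^2)"
      by (rule sum_WW_VV[OF k1]) (simp add: Xrot)
    define w1 where "w1 = card {c\<in>WW k. win a c 0}"
    define w2 where "w2 = wcnt (k - 2 * m) (k - 1 - 2 * s)"
    have w1_val: "w1 = wcnt (k - m) (k - 1 - s)"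
      unfolding w1_def m_def s_def by (rule w1_eq) (use kb m_def s_def in auto)
    have S1: "(\<Sum>c\<in>WW k. real (Nc a c)) = real k * real w1"
      using moment1[where k=k and a=a] unfolding w1_def by (metis of_nat_mult of_nat_sum)
    have S2: "(\<Sum>c\<in>WW k. (real (Nc a c))^2) \<le> real k * (real k * real w2 + real (2 * m) * real (card (WW k)))"
    proof -
      have "(\<Sum>c\<in>WW k. (real (Nc a c))^2) = real (\<Sum>c\<in>WW k. (Nc a c)^2)" by simp
      also have "\<dots> = real (k * (\<Sum>d<k. card {c\<in>WW k. win a c 0 \<and> win a c d}))"
        by (simp only: moment2)
      also have "\<dots> \<le> real (k * (k * w2 + 2 * m * card (WW k)))"
        unfolding w2_def m_def s_def
        by (intro of_nat_mono mult_left_mono moment2_bound) (use k1 kb m_def s_def in auto)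
      also have "\<dots> = real k * (real k * real w2 + real (2 * m) * real (card (WW k)))" by simp
      finally show ?thesis .
    qed
    have expand: "(\<Sum>c\<in>WW k. (X c)^2) = (\<Sum>c\<in>WW k. (real (Nc a c))^2) / (real k)^2
        - 2 * \<mu> * (\<Sum>c\<in>WW k. real (Nc a c)) / real k + real (card (WW k)) * \<mu>^2"
    proof -
      have "(X c)^2 = (real (Nc a c))^2 / (real k)^2 - 2 * \<mu> * real (Nc a c) / real k + \<mu>^2" for c
        unfolding X_def using kpos by (simp add: power2_eq_square field_simps)
      then have "(\<Sum>c\<in>WW k. (X c)^2) = (\<Sum>c\<in>WW k. (real (Nc a c))^2 / (real k)^2 - 2 * \<mu> * real (Nc a c) / real k + \<mu>^2)"
        by simp
      also have "\<dots> = (\<Sum>c\<in>WW k. (real (Nc a c))^2) / (real k)^2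
        - 2 * \<mu> * (\<Sum>c\<in>WW k. real (Nc a c)) / real k + real (card (WW k)) * \<mu>^2"
        by (simp add: sum.distrib sum_subtractf sum_divide_distrib sum_distrib_left)
      finally show ?thesis .
    qed
    have nWr: "real (card (WW k)) = real (wcnt k (k - 1))" using nW by simp
    have nWr_pos: "real (card (WW k)) > 0" using nWpos nW by simp
    have bound: "(\<Sum>c\<in>WW k. (X c)^2) \<le> real (card (WW k)) * E k"
    proof -
      have "(\<Sum>c\<in>WW k. (X c)^2) \<le> real k * (real k * real w2 + real (2 * m) * real (card (WW k))) / (real k)^2
          - 2 * \<mu> * (real k * real w1) / real k + real (card (WW k)) * \<mu>^2"
        unfolding expand S1 using S2 kpos by (simp add: divide_right_mono)
      also have "\<dots> = real w2 + real (2 * m) * real (card (WW k)) / real k - 2 * \<mu> * real w1 + real (card (WW k)) * \<mu>^2"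
        using kpos by (simp add: field_simps power2_eq_square)
      also have "\<dots> = real (card (WW k)) * E k"
        unfolding E_def p1_def p2_def w1_val w2_def using nWr nWr_pos
        by (simp add: field_simps)
      finally show ?thesis .
    qed
    have sumT: "(\<Sum>t\<in>?T. (X (pre t))^2) \<le> real (card ?T) * E k"
    proof -
      have "real k * (\<Sum>t\<in>?T. (X (pre t))^2) \<le> real (card (WW k)) * E k"
        using s1 s2 bound by simp
      also have "\<dots> = real k * (real (card ?T) * E k)" using cWT by simp
      finally show ?thesis using kpos by simp
    qed
    define Bd where "Bd = {t \<in> ?T. \<not> \<bar>rho F t - \<mu>\<bar> \<le> \<epsilon>}"
    define Gd where "Gd = {t \<in> ?T. \<bar>rho F t - \<mu>\<bar> \<le> \<epsilon>}"
    have close: "\<bar>rho F t - real (Nc a (pre t)) / real k\<bar> \<le> real (m + 1) / real k" if t: "t \<in> ?T" for t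
    proof -
      have r: "rho F t = real (Lin a (pre t)) / real k" using rho_Lin[OF t] a_def by simp
      have "Lin a (pre t) \<le> Nc a (pre t)" "Nc a (pre t) \<le> Lin a (pre t) + m + 1"
        using Lin_Nc[of a "pre t"] m_def by auto
      then have "\<bar>real (Lin a (pre t)) - real (Nc a (pre t))\<bar> \<le> real (m + 1)" by simp
      then have "\<bar>real (Lin a (pre t)) - real (Nc a (pre t))\<bar> / real k \<le> real (m + 1) / real k"
        using kpos by (simp add: divide_right_mono)
      then show ?thesis unfolding r using kpos by (simp add: diff_divide_distrib[symmetric] abs_divide)
    qed
    have bad1: "1 \<le> 4 * (X (pre t))^2 / \<epsilon>^2" if t: "t \<in> Bd" for t
    proof -
      have tT: "t \<in> ?T" and nb: "\<bar>rho F t - \<mu>\<bar> > \<epsilon>" using t by (auto simp: Bd_def)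
      have "\<bar>X (pre t)\<bar> \<ge> \<bar>rho F t - \<mu>\<bar> - \<bar>rho F t - real (Nc a (pre t)) / real k\<bar>"
        unfolding X_def by linarith
      then have "\<bar>X (pre t)\<bar> > \<epsilon> / 2" using close[OF tT] mk nb by linarith
      then have "(\<epsilon>/2)^2 < (X (pre t))^2"
        using ep by (metis abs_le_square_iff less_le_not_le not_le power2_abs zero_le_divide_iff order.strict_implies_order abs_of_nonneg power_strict_mono zero_less_numeral zero_less_two half_gt_zero)
      then show ?thesis using ep by (simp add: field_simps power2_eq_square)
    qed
    have finB: "finite Bd" using finT by (simp add: Bd_def)
    have "real (card Bd) = (\<Sum>t\<in>Bd. 1)" by simp
    also have "\<dots> \<le> (\<Sum>t\<in>Bd. 4 * (X (pre t))^2 / \<epsilon>^2)" using bad1 by (intro sum_mono) auto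
    also have "\<dots> \<le> (\<Sum>t\<in>?T. 4 * (X (pre t))^2 / \<epsilon>^2)"
      by (rule sum_mono2[OF finT]) (auto simp: Bd_def)
    also have "\<dots> = 4 / \<epsilon>^2 * (\<Sum>t\<in>?T. (X (pre t))^2)"
      by (simp add: sum_distrib_left)
    also have "\<dots> \<le> 4 / \<epsilon>^2 * (real (card ?T) * E k)"
      using sumT ep by (intro mult_left_mono) auto
    also have "\<dots> < 4 / \<epsilon>^2 * (real (card ?T) * (\<epsilon>^3 / 4))"
      using Ek nTpos ep by (intro mult_strict_left_mono) auto
    also have "\<dots> = real (card ?T) * \<epsilon>" using ep by (simp add: field_simps power2_eq_square power3_eq_cube)
    finally have cB: "real (card Bd) < real (card ?T) * \<epsilon>" .
    have part: "card Gd + card Bd = card ?T"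
    proof -
      have "Gd \<union> Bd = ?T" "Gd \<inter> Bd = {}" by (auto simp: Gd_def Bd_def)
      then show ?thesis using card_Un_disjoint[of Gd Bd] finT by (metis finite_Un)
    qed
    have "real (card Gd) / real (card ?T) = 1 - real (card Bd) / real (card ?T)"
      using part nTpos by (simp add: field_simps)
    also have "\<dots> > 1 - \<epsilon>" using cB nTpos by (simp add: field_simps)
    finally show "real (card {t \<in> ?T. \<bar>rho F t - 1 / 2 ^ (2 * fsize F - length F)\<bar> \<le> \<epsilon>}) / real (card ?T) > 1 - \<epsilon>"
      unfolding mu_eq Gd_def .
  qed
qed


end
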